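(* Let $\varsigma,\lambda:[0,1]\to\mathbb{R}_{>0}$ be deterministic Hölder-continuous functions and $f>0$. For integrable $\phi:[0,1]\to\mathbb{R}_{>0}$ with $\int_0^1\phi(s)ds=1$ and integrable $\mu:[0,1]\to[0,\infty)$, consider the asymptotic variance $$V(\phi,\mu):=\frac{2}{f}\int_0^1\frac{\varsigma^4(r)\lambda^2(r)}{\phi(r)}dr+2\int_0^1\varsigma^4(r)\mu(r)dr+\int_0^1\varsigma^4(r)\lambda(r)dr.$$ Then $V(\phi,\mu)$ is minimized by the choice $$\phi(t)=\frac{\varsigma^2(t)\lambda(t)}{\int_0^1\varsigma^2(r)\lambda(r)dr},\qquad\mu(t)=0,$$ and the minimal value equals $\frac{2}{f}\mathrm{IV}^2+\mathrm{IQ}$, where $\mathrm{IV}=\int_0^1\varsigma^2(r)\lambda(r)dr$ and $\mathrm{IQ}=\int_0^1\varsigma^4(r)\lambda(r)dr$.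
   Context: $V(\phi,\mu)$ is the asymptotic variance of $\sqrt{T}(\mathrm{RV}(\boldsymbol{\tau}^T)-\mathrm{IV})$ for a realized variance estimator under a sampling scheme with sampling frequency $f$, sampling intensity function $\phi$ (the limiting normalized inverse of expected waiting times between sampling points) and $\mu$ (the limiting conditional variance rate of the number of ticks between adjacent sampling points), in a tick-time stochastic volatility model with rescaled tick volatility $\varsigma$ and trading intensity $\lambda$. *)

theory Defs
  imports "HOL-Analysis.Analysis"
begin

definition holder_continuous_on :: "real set \<Rightarrow> (real \<Rightarrow> real) \<Rightarrow> bool" where
  "holder_continuous_on S g \<longleftrightarrow>
     (\<exists>\<alpha> C. 0 < \<alpha> \<and> \<alpha> \<le> 1 \<and> 0 \<le> C \<and>
        (\<forall>x\<in>S. \<forall>y\<in>S. \<bar>g x - g y\<bar> \<le> C * \<bar>x - y\<bar> powr \<alpha>))"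

definition asym_var ::
  "real \<Rightarrow> (real \<Rightarrow> real) \<Rightarrow> (real \<Rightarrow> real) \<Rightarrow> (real \<Rightarrow> real) \<Rightarrow> (real \<Rightarrow> real) \<Rightarrow> ennreal" where
  "asym_var f sig lam \<phi> \<mu> =
     ennreal (2 / f) * (\<integral>\<^sup>+ r\<in>{0..1}. ennreal (sig r ^ 4 * lam r ^ 2 / \<phi> r) \<partial>lborel)
     + 2 * (\<integral>\<^sup>+ r\<in>{0..1}. ennreal (sig r ^ 4 * \<mu> r) \<partial>lborel)
     + (\<integral>\<^sup>+ r\<in>{0..1}. ennreal (sig r ^ 4 * lam r) \<partial>lborel)"

definition IV :: "(real \<Rightarrow> real) \<Rightarrow> (real \<Rightarrow> real) \<Rightarrow> real" where
  "IV sig lam = (LBINT r:{0..1}. sig r ^ 2 * lam r)"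

definition IQ :: "(real \<Rightarrow> real) \<Rightarrow> (real \<Rightarrow> real) \<Rightarrow> real" where
  "IQ sig lam = (LBINT r:{0..1}. sig r ^ 4 * lam r)"

definition admissible :: "(real \<Rightarrow> real) \<Rightarrow> (real \<Rightarrow> real) \<Rightarrow> bool" where
  "admissible \<phi> \<mu> \<longleftrightarrow>
     set_integrable lborel {0..1} \<phi> \<and> (\<forall>s\<in>{0..1}. 0 < \<phi> s) \<and> (LBINT s:{0..1}. \<phi> s) = 1 \<and>
     set_integrable lborel {0..1} \<mu> \<and> (\<forall>s\<in>{0..1}. 0 \<le> \<mu> s)"

end

theory Submission
  imports Defs
begin

lemma holder_cont:
  assumes "holder_continuous_on S g"
  shows "continuous_on S g"
proof -
  obtain \<alpha> C where a: "0 < \<alpha>" "0 \<le> C" and h: "\<forall>x\<in>S. \<forall>y\<in>S. \<bar>g x - g y\<bar> \<le> C * \<bar>x - y\<bar> powr \<alpha>"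
    using assms unfolding holder_continuous_on_def by blast
  show ?thesis unfolding continuous_on_def
  proof
    fix x assume x: "x \<in> S"
    have "((\<lambda>y. g y - g x) \<longlongrightarrow> 0) (at x within S)"
    proof (rule Lim_null_comparison)
      show "\<forall>\<^sub>F y in at x within S. norm (g y - g x) \<le> C * \<bar>y - x\<bar> powr \<alpha>"
        using h x by (auto simp: eventually_at_filter)
      have "((\<lambda>y. \<bar>y - x\<bar> powr \<alpha>) \<longlongrightarrow> 0) (at x within S)"
        by (rule tendsto_zero_powrI) (auto intro!: tendsto_eq_intros a)
      then show "((\<lambda>y. C * \<bar>y - x\<bar> powr \<alpha>) \<longlongrightarrow> 0) (at x within S)"
        using tendsto_mult_left[of _ 0 _ C] by fastforce
    qed
    then show "(g \<longlongrightarrow> g x) (at x within S)"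
      by (simp add: LIM_zero_iff)
  qed
qed

lemma nnset_eq:
  fixes h :: "real \<Rightarrow> real"
  assumes "set_integrable lborel A h" "\<forall>x\<in>A. 0 \<le> h x"
  shows "(\<integral>\<^sup>+ r\<in>A. ennreal (h r) \<partial>lborel) = ennreal (LBINT r:A. h r)"
proof -
  have "(\<integral>\<^sup>+ r\<in>A. ennreal (h r) \<partial>lborel) = (\<integral>\<^sup>+ r. ennreal (indicator A r *\<^sub>R h r) \<partial>lborel)"
    by (rule nn_integral_cong) (simp split: split_indicator)
  also have "\<dots> = ennreal (LBINT r:A. h r)"
    unfolding set_lebesgue_integral_def
    by (rule nn_integral_eq_integral) (use assms in \<open>auto simp: set_integrable_def split: split_indicator\<close>)
  finally show ?thesis .
qed

lemma nnset_cong: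
  assumes "\<And>x. x \<in> A \<Longrightarrow> g x = h x"
  shows "(\<integral>\<^sup>+ r\<in>A. g r \<partial>M) = (\<integral>\<^sup>+ r\<in>A. h r \<partial>M)"
  by (rule nn_integral_cong) (use assms in \<open>simp split: split_indicator\<close>)

lemma contint:
  fixes h :: "real \<Rightarrow> real"
  assumes "continuous_on {0..1} h"
  shows "set_integrable lborel {0..1} h"
  unfolding set_integrable_def by (rule borel_integrable_compact) (use assms in auto)

theorem corollary2:
  fixes f :: real and sig lam :: "real \<Rightarrow> real"
  assumes "holder_continuous_on {0..1} sig" and "holder_continuous_on {0..1} lam"
    and "\<forall>t\<in>{0..1}. 0 < sig t" and "\<forall>t\<in>{0..1}. 0 < lam t"
    and "0 < f"
  defines "\<phi>\<^sub>0 \<equiv> (\<lambda>t. sig t ^ 2 * lam t / IV sig lam)"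
  shows "admissible \<phi>\<^sub>0 (\<lambda>t. 0)
    \<and> (\<forall>\<phi> \<mu>. admissible \<phi> \<mu> \<longrightarrow> asym_var f sig lam \<phi>\<^sub>0 (\<lambda>t. 0) \<le> asym_var f sig lam \<phi> \<mu>)
    \<and> asym_var f sig lam \<phi>\<^sub>0 (\<lambda>t. 0) = ennreal (2 / f * (IV sig lam)\<^sup>2 + IQ sig lam)"
proof -
  define A :: "real set" where "A = {0..1}"
  define a where "a = (\<lambda>r. sig r ^ 2 * lam r)"
  define I where "I = IV sig lam"
  have sc: "continuous_on A sig" and lc: "continuous_on A lam"
    using holder_cont assms(1,2) unfolding A_def by auto
  have sp: "\<And>t. t \<in> A \<Longrightarrow> 0 < sig t" and lp: "\<And>t. t \<in> A \<Longrightarrow> 0 < lam t"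
    using assms(3,4) unfolding A_def by auto
  have ac: "continuous_on A a" unfolding a_def by (intro continuous_intros sc lc)
  have ap: "0 < a t" if "t \<in> A" for t unfolding a_def using sp[OF that] lp[OF that] by simp
  have ai: "set_integrable lborel A a" using contint ac unfolding A_def by blast
  have I_eq: "I = (LBINT r:A. a r)" unfolding I_def IV_def a_def A_def by simp
  have Ipos: "0 < I"
  proof -
    obtain x where x: "x \<in> A" "\<forall>y\<in>A. a x \<le> a y"
      using continuous_attains_inf[OF _ _ ac] unfolding A_def by auto
    have "(LBINT r:A. a x) \<le> (LBINT r:A. a r)"
      by (rule set_integral_mono) (use x ai contint[of "\<lambda>_. a x"] in \<open>auto simp: A_def\<close>)
    moreover have "(LBINT r:A. a x) = a x"
      unfolding A_def by (subst set_integral_const) auto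
    ultimately show ?thesis using ap[OF x(1)] I_eq by simp
  qed
  have phi0: "\<phi>\<^sub>0 = (\<lambda>t. a t / I)" unfolding \<phi>\<^sub>0_def a_def I_def by simp
  have adm: "admissible \<phi>\<^sub>0 (\<lambda>t. 0)"
    unfolding admissible_def phi0
  proof (intro conjI)
    show "set_integrable lborel {0..1} (\<lambda>t. a t / I)"
      by (rule contint) (use ac Ipos in \<open>auto simp: A_def intro!: continuous_intros\<close>)
    show "\<forall>s\<in>{0..1}. 0 < a s / I" using ap Ipos A_def by auto
    show "(LBINT s:{0..1}. a s / I) = 1" using I_eq Ipos A_def by simp
    show "set_integrable lborel {0..1} (\<lambda>t. 0::real)" by (simp add: set_integrable_def)
  qed auto
  define T3 where "T3 = (\<integral>\<^sup>+ r\<in>{0..1}. ennreal (sig r ^ 4 * lam r) \<partial>lborel)"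
  have T1_0: "(\<integral>\<^sup>+ r\<in>{0..1}. ennreal (sig r ^ 4 * lam r ^ 2 / \<phi>\<^sub>0 r) \<partial>lborel) = ennreal (I^2)"
  proof -
    have "(\<integral>\<^sup>+ r\<in>{0..1}. ennreal (sig r ^ 4 * lam r ^ 2 / \<phi>\<^sub>0 r) \<partial>lborel)
        = (\<integral>\<^sup>+ r\<in>A. ennreal (I * a r) \<partial>lborel)"
      unfolding A_def
    proof (rule nnset_cong)
      fix x :: real assume "x \<in> {0..1}"
      then have "0 < sig x" "0 < lam x" using sp lp A_def by auto
      then show "ennreal (sig x ^ 4 * lam x ^ 2 / \<phi>\<^sub>0 x) = ennreal (I * a x)"
        unfolding phi0 a_def using Ipos by (simp add: field_simps power2_eq_square power4_eq_xxxx)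
    qed
    also have "\<dots> = ennreal (LBINT r:A. I * a r)"
      by (rule nnset_eq) (use ai ap Ipos in \<open>auto simp: set_integrable_mult_right less_imp_le\<close>)
    also have "\<dots> = ennreal (I^2)" using I_eq by (simp add: power2_eq_square)
    finally show ?thesis .
  qed
  have qi: "set_integrable lborel {0..1} (\<lambda>r. sig r ^ 4 * lam r)"
    by (rule contint) (use sc lc in \<open>auto simp: A_def intro!: continuous_intros\<close>)
  have qnn: "0 \<le> sig x ^ 4 * lam x" if "x \<in> {0..1}" for x
    using sp[of x] lp[of x] that A_def by simp
  have T3_eq: "T3 = ennreal (IQ sig lam)"
    unfolding T3_def IQ_def
    by (rule nnset_eq) (use qi qnn in auto)
  have IQnn: "0 \<le> IQ sig lam"
    unfolding IQ_def set_lebesgue_integral_def using qnn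
    by (auto intro!: integral_nonneg simp: indicator_def)
  have val: "asym_var f sig lam \<phi>\<^sub>0 (\<lambda>t. 0) = ennreal (2 / f * (IV sig lam)\<^sup>2 + IQ sig lam)"
    unfolding asym_var_def T1_0 T3_def[symmetric] T3_eq I_def
    using assms(5) IQnn by (simp add: ennreal_mult[symmetric] ennreal_plus)
  have ineq: "asym_var f sig lam \<phi>\<^sub>0 (\<lambda>t. 0) \<le> asym_var f sig lam \<phi> \<mu>" if adm2: "admissible \<phi> \<mu>" for \<phi> \<mu>
  proof -
    have pi: "set_integrable lborel A \<phi>" and pp: "\<And>s. s \<in> A \<Longrightarrow> 0 < \<phi> s"
      and p1: "(LBINT s:A. \<phi> s) = 1"
      using adm2 unfolding admissible_def A_def by auto
    define g where "g = (\<lambda>r. indicator A r * a r)"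
    define p where "p = (\<lambda>r. indicator A r * \<phi> r)"
    have gi: "integrable lborel g" using ai unfolding set_integrable_def g_def by simp
    have pint: "integrable lborel p" using pi unfolding set_integrable_def p_def by simp
    have [measurable]: "g \<in> borel_measurable lborel" using gi by (rule borel_measurable_integrable)
    have [measurable]: "p \<in> borel_measurable lborel" using pint by (rule borel_measurable_integrable)
    have gI: "integral\<^sup>L lborel g = I" using I_eq unfolding g_def set_lebesgue_integral_def by simp
    have pI: "integral\<^sup>L lborel p = 1" using p1 unfolding p_def set_lebesgue_integral_def by simp
    define T1 where "T1 = (\<integral>\<^sup>+ r\<in>{0..1}. ennreal (sig r ^ 4 * lam r ^ 2 / \<phi> r) \<partial>lborel)"
    have T1_eq: "T1 = (\<integral>\<^sup>+ r. ennreal (g r ^ 2 / p r) \<partial>lborel)"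
      unfolding T1_def
    proof (rule nn_integral_cong)
      fix x :: real
      show "ennreal (sig x ^ 4 * lam x ^ 2 / \<phi> x) * indicator {0..1} x = ennreal (g x ^ 2 / p x)"
        unfolding g_def p_def a_def A_def
        by (simp split: split_indicator add: power_mult_distrib flip: power_mult)
    qed
    have pw: "ennreal (2 * I * g r) \<le> ennreal (g r ^ 2 / p r) + ennreal (I^2 * p r)" for r
    proof (cases "r \<in> A")
      case True
      have p0: "0 < p r" using pp True p_def by simp
      have g0: "0 \<le> g r" using ap True g_def by (simp add: less_imp_le)
      have "0 \<le> (g r - I * p r)^2" by simp
      then have "2 * I * g r * p r \<le> g r ^ 2 + I^2 * p r * p r"
        by (simp add: power2_eq_square algebra_simps)
      then have "2 * I * g r \<le> g r ^ 2 / p r + I^2 * p r"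
        using p0 by (simp add: field_simps power2_eq_square)
      moreover have "ennreal (g r ^ 2 / p r) + ennreal (I^2 * p r) = ennreal (g r ^ 2 / p r + I^2 * p r)"
        using p0 by (intro ennreal_plus[symmetric]) auto
      ultimately show ?thesis by (simp add: ennreal_leI)
    next
      case False then show ?thesis by (simp add: g_def)
    qed
    have L: "(\<integral>\<^sup>+ r. ennreal (2 * I * g r) \<partial>lborel) = ennreal (2 * I * I)"
    proof -
      have "(\<integral>\<^sup>+ r. ennreal (2 * I * g r) \<partial>lborel) = ennreal (integral\<^sup>L lborel (\<lambda>r. 2 * I * g r))"
        by (rule nn_integral_eq_integral) (use gi Ipos ap in \<open>auto simp: g_def less_imp_le split: split_indicator\<close>)
      then show ?thesis using gI by simp
    qed
    have R2: "(\<integral>\<^sup>+ r. ennreal (I^2 * p r) \<partial>lborel) = ennreal (I^2)"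
    proof -
      have "(\<integral>\<^sup>+ r. ennreal (I^2 * p r) \<partial>lborel) = ennreal (integral\<^sup>L lborel (\<lambda>r. I^2 * p r))"
        by (rule nn_integral_eq_integral) (use pint pp in \<open>auto simp: p_def less_imp_le split: split_indicator\<close>)
      then show ?thesis using pI by simp
    qed
    have "ennreal (2 * I * I) \<le> (\<integral>\<^sup>+ r. ennreal (g r ^ 2 / p r) + ennreal (I^2 * p r) \<partial>lborel)"
      unfolding L[symmetric] by (rule nn_integral_mono) (rule pw)
    also have "\<dots> = T1 + ennreal (I^2)"
      unfolding T1_eq R2[symmetric] by (rule nn_integral_add) auto
    finally have le: "ennreal (2 * I * I) \<le> T1 + ennreal (I^2)" .
    have T1ge: "ennreal (I^2) \<le> T1"
    proof (cases T1 rule: ennreal_cases)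
      case (real x)
      have "ennreal x + ennreal (I^2) = ennreal (x + I^2)" using real by (intro ennreal_plus[symmetric]) auto
      then have "ennreal (2 * I * I) \<le> ennreal (x + I^2)" using le real by simp
      then have "2 * I * I \<le> x + I^2" using real by (subst (asm) ennreal_le_iff) auto
      then have "I^2 \<le> x" by (simp add: power2_eq_square)
      then show ?thesis using real by (simp add: ennreal_leI)
    qed simp
    have "asym_var f sig lam \<phi>\<^sub>0 (\<lambda>t. 0) = ennreal (2 / f) * ennreal (I^2) + 0 + T3"
      unfolding asym_var_def T1_0 T3_def by simp
    also have "\<dots> \<le> ennreal (2 / f) * T1 + 2 * (\<integral>\<^sup>+ r\<in>{0..1}. ennreal (sig r ^ 4 * \<mu> r) \<partial>lborel) + T3"
      by (intro add_mono mult_left_mono T1ge) auto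
    also have "\<dots> = asym_var f sig lam \<phi> \<mu>"
      unfolding asym_var_def T1_def T3_def by simp
    finally show ?thesis .
  qed
  show ?thesis using adm ineq val by blast
qed

end
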